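(* Let $0<A<B$ and $h(t)=t\left(\frac{15-10t+3t^2}{8}\right)^2$. For $x>0$ define $$\rho(x)=\frac{\min\{h(t):t\in[A/x,B/x]\}}{\max\{h(t):t\in[A/x,B/x]\}} .$$ Then $\rho$ attains its maximum over $x\in(0,\infty)$ at $$x=\frac{3}{10}(A+B)+\frac25\sqrt{\tfrac12(A^2+B^2)+\tfrac1{16}(B-A)^2}.$$
   Context: Interpretation: if a Gabor frame operator $S$ has spectrum $[A,B]$ and is rescaled to $S/x$, one step of the iteration $\gamma\mapsto\frac{15}{8}\gamma-\frac54S_\gamma\gamma+\frac38S_\gamma^2\gamma$ (with $S_\gamma$ the frame operator of $(\gamma,a,b)$) maps the spectrum via $h$, and $\rho(x)$ is the resulting ratio of smallest to largest frame bound. *)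

theory Defs
  imports Complex_Main
begin

definition h_fun :: "real \<Rightarrow> real" where
  "h_fun t = t * ((15 - 10 * t + 3 * t^2) / 8)^2"

text \<open>rho A B x = min of h over [A/x, B/x] divided by max of h over the same interval
  (min/max of a continuous function on a compact interval, written as Inf/Sup of the image).\<close>
definition rho :: "real \<Rightarrow> real \<Rightarrow> real \<Rightarrow> real" where
  "rho A B x = Inf (h_fun ` {A/x..B/x}) / Sup (h_fun ` {A/x..B/x})"

end

theory Submission
  imports Defs
begin

definition qf :: "real \<Rightarrow> real" where "qf t = 15 - 10 * t + 3 * t^2"

lemma qf_pos: "qf t > 0"
proof -
  have "qf t = 3 * (t - 5/3)^2 + 20/3" by (simp add: qf_def power2_eq_square algebra_simps)
  moreover have "(t - 5/3)^2 \<ge> 0" by simp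
  ultimately show ?thesis by linarith
qed

lemma h_qf: "h_fun t = t * (qf t)^2 / 64"
  by (simp add: h_fun_def qf_def power2_eq_square field_simps)

lemma h_pos: "t > 0 \<Longrightarrow> h_fun t > 0"
  using qf_pos[of t] by (simp add: h_qf)

lemma h_mono: assumes "x \<le> y" shows "h_fun x \<le> h_fun y"
proof (rule DERIV_nonneg_imp_nondecreasing[OF assms])
  fix z
  have "DERIV h_fun z :> 15 * qf z * (1 - z)^2 / 64"
    unfolding h_fun_def[abs_def]
    by (auto intro!: derivative_eq_intros simp: qf_def power2_eq_square field_simps)
  moreover have "15 * qf z * (1 - z)^2 / 64 \<ge> 0" using qf_pos[of z] by simp
  ultimately show "\<exists>y. DERIV h_fun z :> y \<and> 0 \<le> y" by blast
qed

lemma rho_eq: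
  assumes "0 < x" "0 < A" "A < B"
  shows "rho A B x = h_fun (A/x) / h_fun (B/x)"
proof -
  have le: "A/x \<le> B/x" using assms by (simp add: divide_right_mono)
  have "Inf (h_fun ` {A/x..B/x}) = h_fun (A/x)"
    by (rule cInf_eq_minimum) (use le h_mono in auto)
  moreover have "Sup (h_fun ` {A/x..B/x}) = h_fun (B/x)"
    by (rule cSup_eq_maximum) (use le h_mono in auto)
  ultimately show ?thesis by (simp add: rho_def)
qed

lemma key_identity:
  fixes A B s t :: real
  shows "qf (A*t) * qf (B*s) - qf (A*s) * qf (B*t)
    = 15*(B-A)*(3*(A+B) - 2*A*B*t) * (s-t)^2 - 30*(B-A)*(A*B*t^2 - 3*(A+B)*t + 5)*(s-t)"
  unfolding qf_def by (simp add: power2_eq_square algebra_simps)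

theorem mainTheorem11:
  fixes A B :: real
  assumes "0 < A" and "A < B"
  defines "x0 \<equiv> 3/10 * (A + B) + 2/5 * sqrt (1/2 * (A^2 + B^2) + 1/16 * (B - A)^2)"
  shows "x0 > 0 \<and> (\<forall>x>0. rho A B x \<le> rho A B x0)"
proof -
  define Qd where "Qd = 1/2 * (A^2 + B^2) + 1/16 * (B - A)^2"
  have Qd0: "Qd \<ge> 0" unfolding Qd_def by simp
  define sq where "sq = sqrt Qd"
  have sq0: "sq \<ge> 0" unfolding sq_def using Qd0 by simp
  have sqsq: "sq^2 = Qd" unfolding sq_def using Qd0 by simp
  have x0e: "x0 = 3/10 * (A+B) + 2/5 * sq" unfolding x0_def sq_def Qd_def by simp
  have x0pos: "x0 > 0"
  proof -
    have "3/10*(A+B) > 0" "2/5*sq \<ge> 0" using assms sq0 by auto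
    then show ?thesis unfolding x0e by linarith
  qed
  have quad: "5*x0^2 - 3*(A+B)*x0 + A*B = 0"
  proof -
    have "5*x0^2 - 3*(A+B)*x0 + A*B = 4/5*(sq^2 - Qd)"
      unfolding x0e Qd_def by (simp add: power2_eq_square field_simps)
    then show ?thesis using sqsq by simp
  qed
  define t where "t = 1/x0"
  have tpos: "t > 0" using x0pos t_def by simp
  have Qt: "A*B*t^2 - 3*(A+B)*t + 5 = 0"
  proof -
    have "A*B*t^2 - 3*(A+B)*t + 5 = (5*x0^2 - 3*(A+B)*x0 + A*B) / x0^2"
      using x0pos unfolding t_def by (simp add: field_simps power2_eq_square)
    then show ?thesis using quad by simp
  qed
  have ct: "3*(A+B) - 2*A*B*t \<ge> 0"
  proof -
    have a1: "x0 \<ge> 3/10*(A+B)" using x0e sq0 by simp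
    have a2: "3/10*(A+B) * (3*(A+B)) \<ge> 2*A*B"
    proof -
      have e: "3/10*(A+B) * (3*(A+B)) - 2*A*B = 1/10*((A-B)*(A-B)) + 8/10*(A*A) + 8/10*(B*B)"
        by (simp add: algebra_simps)
      have "(A-B)*(A-B) \<ge> 0" "A*A \<ge> 0" "B*B \<ge> 0" by simp_all
      then show ?thesis using e by linarith
    qed
    have "x0 * (3*(A+B)) \<ge> 2*A*B"
    proof -
      have "x0 * (3*(A+B)) \<ge> 3/10*(A+B) * (3*(A+B))"
        using a1 assms by (intro mult_right_mono) auto
      then show ?thesis using a2 by linarith
    qed
    then show ?thesis using x0pos unfolding t_def by (simp add: field_simps)
  qed
  have main: "rho A B x \<le> rho A B x0" if xpos: "x > 0" for x
  proof -
    define s where "s = 1/x"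
    have spos: "s > 0" using xpos s_def by simp
    have ineq: "qf (A*s) * qf (B*t) \<le> qf (A*t) * qf (B*s)"
    proof -
      have "qf (A*t) * qf (B*s) - qf (A*s) * qf (B*t)
          = 15*(B-A)*(3*(A+B) - 2*A*B*t) * (s-t)^2" using key_identity[of A t B s] Qt by simp
      moreover have "15*(B-A)*(3*(A+B) - 2*A*B*t) * (s-t)^2 \<ge> 0"
        using ct assms by simp
      ultimately show ?thesis by linarith
    qed
    have sq_ineq: "(qf (A*s) * qf (B*t))^2 \<le> (qf (A*t) * qf (B*s))^2"
      using ineq qf_pos by (intro power_mono) (auto intro: mult_nonneg_nonneg less_imp_le)
    have hx: "h_fun (A/x) = A*s * (qf (A*s))^2 / 64" "h_fun (B/x) = B*s * (qf (B*s))^2 / 64"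
      unfolding s_def by (simp_all add: h_qf)
    have hx0: "h_fun (A/x0) = A*t * (qf (A*t))^2 / 64" "h_fun (B/x0) = B*t * (qf (B*t))^2 / 64"
      unfolding t_def by (simp_all add: h_qf)
    have pB1: "qf (B*s) > 0" and pB2: "qf (B*t) > 0" using qf_pos by auto
    have "A*s * (qf (A*s))^2 / 64 / (B*s * (qf (B*s))^2 / 64)
        \<le> A*t * (qf (A*t))^2 / 64 / (B*t * (qf (B*t))^2 / 64)"
    proof -
      have L: "A*s * (qf (A*s))^2 / 64 / (B*s * (qf (B*s))^2 / 64)
          = (A/B) * ((qf (A*s) * qf (B*t))^2 / (qf (B*s) * qf (B*t))^2)"
        using spos tpos assms pB1 pB2 by (simp add: field_simps power2_eq_square)
      have R: "A*t * (qf (A*t))^2 / 64 / (B*t * (qf (B*t))^2 / 64)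
          = (A/B) * ((qf (A*t) * qf (B*s))^2 / (qf (B*s) * qf (B*t))^2)"
        using spos tpos assms pB1 pB2 by (simp add: field_simps power2_eq_square)
      have "(qf (A*s) * qf (B*t))^2 / (qf (B*s) * qf (B*t))^2
          \<le> (qf (A*t) * qf (B*s))^2 / (qf (B*s) * qf (B*t))^2"
        using sq_ineq by (simp add: divide_right_mono)
      then show ?thesis unfolding L R using assms
        by (intro mult_left_mono) auto
    qed
    then show ?thesis
      using rho_eq[OF xpos assms(1,2)] rho_eq[OF x0pos assms(1,2)] hx hx0 by simp
  qed
  show ?thesis using x0pos main by blast
qed

end
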